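(* Let $A$ be a pro-$C^*$-algebra, $H$ a Hilbert space, $\rho=[\rho_{ij}]_{i,j=1}^n$ a completely $n$-positive linear map from $A$ to $L(H)$ with Stinespring representation $(\Phi_\rho,H_\rho,V_{\rho,1},\dots,V_{\rho,n})$, and let $T_1,T_2$ be positive elements of $\Phi_\rho(A)'$. Then $T_1\le T_2$ if and only if $\rho_{T_1}\le\rho_{T_2}$.
   Context: A pro-$C^*$-algebra is a complete Hausdorff topological $*$-algebra over $\mathbb{C}$ whose topology is determined by its continuous $C^*$-seminorms. A representation of $A$ on a Hilbert space $K$ is a continuous $*$-morphism $A\to L(K)$. An $n\times n$ matrix $[\rho_{ij}]$ of continuous linear maps $A\to L(H)$ is completely $n$-positive if the map $M_n(A)\to M_n(L(H))$, $[a_{ij}]\mapsto[\rho_{ij}(a_{ij})]$, is completely positive. For completely $n$-positive $\rho,\theta$, write $\theta\le\rho$ if $\rho-\theta$ is completely $n$-positive. The Stinespring representation of $\rho$ consists of a representation $\Phi_\rho$ of $A$ on a Hilbert space $H_\rho$ and $V_{\rho,1},\dots,V_{\rho,n}\in L(H,H_\rho)$ with $\rho_{ij}(a)=V_{\rho,i}^*\Phi_\rho(a)V_{\rho,j}$ and $\{\Phi_\rho(a)V_{\rho,i}\xi\}$ spanning a dense subspace of $H_\rho$ (it exists and is unique up to unitary equivalence). $\Phi_\rho(A)'$ is the commutant of $\Phi_\rho(A)$ in $L(H_\rho)$. For positive $T\in\Phi_\rho(A)'$, $\rho_T$ denotes the completely $n$-positive map $[a_{ij}]\mapsto[V_{\rho,i}^*T\Phi_\rho(a_{ij})V_{\rho,j}]_{i,j=1}^n$.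 *)

theory Defs
  imports Complex_Main
begin

class complex_vector = ab_group_add +
  fixes scaleC :: "complex \<Rightarrow> 'a \<Rightarrow> 'a" (infixr "*\<^sub>C" 75)
  assumes scaleC_add_right: "c *\<^sub>C (x + y) = c *\<^sub>C x + c *\<^sub>C y"
    and scaleC_add_left: "(c + d) *\<^sub>C x = c *\<^sub>C x + d *\<^sub>C x"
    and scaleC_scaleC: "c *\<^sub>C (d *\<^sub>C x) = (c * d) *\<^sub>C x"
    and scaleC_one: "1 *\<^sub>C x = x"

text \<open>Inner product, conjugate-linear in the first and linear in the second argument.\<close>
class complex_inner = complex_vector +
  fixes cinner :: "'a \<Rightarrow> 'a \<Rightarrow> complex"
  assumes cinner_commute: "cinner x y = cnj (cinner y x)"
    and cinner_add_right: "cinner x (y + z) = cinner x y + cinner x z"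
    and cinner_scaleC_right: "cinner x (c *\<^sub>C y) = c * cinner x y"
    and cinner_ge_zero: "0 \<le> Re (cinner x x)"
    and cinner_eq_zero_iff: "cinner x x = 0 \<longleftrightarrow> x = 0"

class chilbert = complex_inner +
  assumes cauchy_convergent:
    "(\<forall>e>0. \<exists>N::nat. \<forall>m\<ge>N. \<forall>k\<ge>N. sqrt (Re (cinner ((X::nat \<Rightarrow> 'a) m - X k) (X m - X k))) < e)
      \<Longrightarrow> (\<exists>l. \<forall>e>0. \<exists>N. \<forall>k\<ge>N. sqrt (Re (cinner (X k - l) (X k - l))) < e)"

definition cnorm :: "'a::complex_inner \<Rightarrow> real" where
  "cnorm x = sqrt (Re (cinner x x))"

definition cnonneg :: "complex \<Rightarrow> bool" where
  "cnonneg z \<longleftrightarrow> Im z = 0 \<and> 0 \<le> Re z"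

definition bounded_clinear :: "('a::complex_inner \<Rightarrow> 'b::complex_inner) \<Rightarrow> bool" where
  "bounded_clinear f \<longleftrightarrow>
     (\<forall>x y. f (x + y) = f x + f y) \<and> (\<forall>c x. f (c *\<^sub>C x) = c *\<^sub>C f x) \<and>
     (\<exists>K. \<forall>x. cnorm (f x) \<le> K * cnorm x)"

definition adj :: "('a::complex_inner \<Rightarrow> 'b::complex_inner) \<Rightarrow> 'b \<Rightarrow> 'a" where
  "adj f = (SOME g. \<forall>x y. cinner (f x) y = cinner x (g y))"

definition pos_op :: "('a::complex_inner \<Rightarrow> 'a) \<Rightarrow> bool" where
  "pos_op T \<longleftrightarrow> bounded_clinear T \<and> (\<forall>x. cnonneg (cinner x (T x)))"

definition op_le :: "('a::complex_inner \<Rightarrow> 'a) \<Rightarrow> ('a \<Rightarrow> 'a) \<Rightarrow> bool" where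
  "op_le S T \<longleftrightarrow> pos_op (\<lambda>x. T x - S x)"

definition cspan :: "'a::complex_vector set \<Rightarrow> 'a set" where
  "cspan S = {\<Sum>i<(m::nat). c i *\<^sub>C s i | m c s. \<forall>i<m. s i \<in> S}"

definition cdense :: "'a::complex_inner set \<Rightarrow> bool" where
  "cdense S \<longleftrightarrow> (\<forall>x. \<forall>e>0. \<exists>y\<in>S. cnorm (x - y) < e)"

class star_algebra = complex_vector + ring +
  fixes invol :: "'a \<Rightarrow> 'a"
  assumes scaleC_mult_left: "c *\<^sub>C (x * y) = (c *\<^sub>C x) * y"
    and scaleC_mult_right: "c *\<^sub>C (x * y) = x * (c *\<^sub>C y)"
    and invol_invol: "invol (invol x) = x"
    and invol_add: "invol (x + y) = invol x + invol y"
    and invol_scaleC: "invol (c *\<^sub>C x) = cnj c *\<^sub>C invol x"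
    and invol_mult: "invol (x * y) = invol y * invol x"

definition cstar_seminorm :: "('a::star_algebra \<Rightarrow> real) \<Rightarrow> bool" where
  "cstar_seminorm p \<longleftrightarrow>
     (\<forall>x y. p (x + y) \<le> p x + p y) \<and> (\<forall>c x. p (c *\<^sub>C x) = cmod c * p x) \<and>
     (\<forall>x y. p (x * y) \<le> p x * p y) \<and> (\<forall>x. p (invol x * x) = (p x)\<^sup>2)"

definition cont_cstar_seminorms :: "('a::{star_algebra,topological_space} \<Rightarrow> real) set" where
  "cont_cstar_seminorms = {p. cstar_seminorm p \<and> continuous_on UNIV p}"

text \<open>Completeness is completeness of the
  canonical uniform structure (every Cauchy filter converges).\<close>
definition pro_cstar_algebra :: "'a::{star_algebra,topological_space} itself \<Rightarrow> bool" where
  "pro_cstar_algebra _ \<longleftrightarrow>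
     \<comment> \<open>topological *-algebra\<close>
     continuous_on UNIV (\<lambda>(x::'a, y). x + y) \<and>
     continuous_on UNIV (\<lambda>(c, x::'a). c *\<^sub>C x) \<and>
     continuous_on UNIV (\<lambda>(x::'a, y). x * y) \<and>
     continuous_on UNIV (invol :: 'a \<Rightarrow> 'a) \<and>
     \<comment> \<open>Hausdorff\<close>
     (\<forall>x y::'a. x \<noteq> y \<longrightarrow> (\<exists>U V. open U \<and> open V \<and> x \<in> U \<and> y \<in> V \<and> U \<inter> V = {})) \<and>
     \<comment> \<open>topology determined by the continuous C*-seminorms\<close>
     (\<forall>S::'a set. open S \<longleftrightarrow>
        (\<forall>x\<in>S. \<exists>F e. finite F \<and> F \<subseteq> cont_cstar_seminorms \<and> e > 0 \<and>
                  {y. \<forall>p\<in>F. p (y - x) < e} \<subseteq> S)) \<and>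
     \<comment> \<open>complete\<close>
     (\<forall>F::'a filter. F \<noteq> bot \<longrightarrow>
        (\<forall>U. open U \<and> 0 \<in> U \<longrightarrow> eventually (\<lambda>(x, y). x - y \<in> U) (F \<times>\<^sub>F F)) \<longrightarrow>
        (\<exists>l. F \<le> nhds l))"

text \<open>Continuous linear map \<open>A \<rightarrow> L(H)\<close> (norm topology on \<open>L(H)\<close>).\<close>
definition cont_linear_op ::
  "('a::{star_algebra,topological_space} \<Rightarrow> 'h::complex_inner \<Rightarrow> 'k::complex_inner) \<Rightarrow> bool" where
  "cont_linear_op \<phi> \<longleftrightarrow>
     (\<forall>a. bounded_clinear (\<phi> a)) \<and>
     (\<forall>a b x. \<phi> (a + b) x = \<phi> a x + \<phi> b x) \<and>
     (\<forall>c a x. \<phi> (c *\<^sub>C a) x = c *\<^sub>C \<phi> a x) \<and>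
     (\<forall>a0. \<forall>e>0. \<exists>U. open U \<and> a0 \<in> U \<and>
        (\<forall>a\<in>U. \<forall>x. cnorm (\<phi> a x - \<phi> a0 x) \<le> e * cnorm x))"

definition representation ::
  "('a::{star_algebra,topological_space} \<Rightarrow> 'k::chilbert \<Rightarrow> 'k) \<Rightarrow> bool" where
  "representation \<Phi> \<longleftrightarrow> cont_linear_op \<Phi> \<and>
     (\<forall>a b. \<Phi> (a * b) = \<Phi> a \<circ> \<Phi> b) \<and> (\<forall>a. \<Phi> (invol a) = adj (\<Phi> a))"

text \<open>Positivity in matrix algebras over \<open>A\<close> (\<open>x = y\<^sup>* y\<close>) and over \<open>L(H)\<close>
  (positivity of the operator on \<open>H\<^sup>N\<close>); matrices are indexed by a finite set \<open>I\<close>.\<close>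
definition mat_pos_alg :: "'i set \<Rightarrow> ('i \<Rightarrow> 'i \<Rightarrow> 'a::star_algebra) \<Rightarrow> bool" where
  "mat_pos_alg I x \<longleftrightarrow>
     (\<exists>y. \<forall>p\<in>I. \<forall>q\<in>I. x p q = (\<Sum>r\<in>I. invol (y r p) * y r q))"

definition mat_pos_op :: "'i set \<Rightarrow> ('i \<Rightarrow> 'i \<Rightarrow> 'h::complex_inner \<Rightarrow> 'h) \<Rightarrow> bool" where
  "mat_pos_op I T \<longleftrightarrow> (\<forall>\<xi>. cnonneg (\<Sum>p\<in>I. \<Sum>q\<in>I. cinner (\<xi> p) (T p q (\<xi> q))))"

text \<open>Completely n-positive matrix \<open>[\<rho>\<^sub>i\<^sub>j]\<close> (indices \<open>0..n-1\<close>) of continuous linear maps: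
  \<open>M\<^sub>n(A) \<rightarrow> M\<^sub>n(L(H))\<close>, \<open>[a\<^sub>i\<^sub>j] \<mapsto> [\<rho>\<^sub>i\<^sub>j(a\<^sub>i\<^sub>j)]\<close> is completely positive, where
  \<open>M\<^sub>m(M\<^sub>n(-))\<close> is indexed by pairs \<open>(k,i)\<close>, \<open>k<m\<close>, \<open>i<n\<close>.\<close>
definition completely_n_positive ::
  "nat \<Rightarrow> (nat \<Rightarrow> nat \<Rightarrow> 'a::{star_algebra,topological_space} \<Rightarrow> 'h::complex_inner \<Rightarrow> 'h) \<Rightarrow> bool" where
  "completely_n_positive n \<rho> \<longleftrightarrow>
     (\<forall>i<n. \<forall>j<n. cont_linear_op (\<rho> i j)) \<and>
     (\<forall>(m::nat) x. mat_pos_alg ({..<m} \<times> {..<n}) x \<longrightarrow>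
        mat_pos_op ({..<m} \<times> {..<n}) (\<lambda>(k, i) (l, j). \<rho> i j (x (k, i) (l, j))))"

definition cpn_le ::
  "nat \<Rightarrow> (nat \<Rightarrow> nat \<Rightarrow> 'a::{star_algebra,topological_space} \<Rightarrow> 'h::complex_inner \<Rightarrow> 'h)
       \<Rightarrow> (nat \<Rightarrow> nat \<Rightarrow> 'a \<Rightarrow> 'h \<Rightarrow> 'h) \<Rightarrow> bool" where
  "cpn_le n \<theta> \<rho> \<longleftrightarrow> completely_n_positive n (\<lambda>i j a x. \<rho> i j a x - \<theta> i j a x)"

definition stinespring_rep ::
  "nat \<Rightarrow> (nat \<Rightarrow> nat \<Rightarrow> 'a::{star_algebra,topological_space} \<Rightarrow> 'h::chilbert \<Rightarrow> 'h)
       \<Rightarrow> ('a \<Rightarrow> 'k::chilbert \<Rightarrow> 'k) \<Rightarrow> (nat \<Rightarrow> 'h \<Rightarrow> 'k) \<Rightarrow> bool" where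
  "stinespring_rep n \<rho> \<Phi> V \<longleftrightarrow>
     representation \<Phi> \<and> (\<forall>i<n. bounded_clinear (V i)) \<and>
     (\<forall>i<n. \<forall>j<n. \<forall>a. \<rho> i j a = adj (V i) \<circ> \<Phi> a \<circ> V j) \<and>
     cdense (cspan {\<Phi> a (V i \<xi>) | a i \<xi>. i < n})"

definition commutant :: "('a \<Rightarrow> 'k::complex_inner \<Rightarrow> 'k) \<Rightarrow> ('k \<Rightarrow> 'k) set" where
  "commutant \<Phi> = {T. bounded_clinear T \<and> (\<forall>a. T \<circ> \<Phi> a = \<Phi> a \<circ> T)}"

definition rho_T :: "(nat \<Rightarrow> 'h::complex_inner \<Rightarrow> 'k::complex_inner) \<Rightarrow> ('a \<Rightarrow> 'k \<Rightarrow> 'k)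
                      \<Rightarrow> ('k \<Rightarrow> 'k) \<Rightarrow> nat \<Rightarrow> nat \<Rightarrow> 'a \<Rightarrow> 'h \<Rightarrow> 'h" where
  "rho_T V \<Phi> T = (\<lambda>i j a. adj (V i) \<circ> T \<circ> \<Phi> a \<circ> V j)"

end

theory Submission
  imports Defs
begin


lemma scaleC_zero_left [simp]: "(0::complex) *\<^sub>C (x::'a::complex_vector) = 0"
proof -
  have "(0::complex) *\<^sub>C x = (0 + 0) *\<^sub>C x" by simp
  also have "\<dots> = 0 *\<^sub>C x + 0 *\<^sub>C x" by (rule scaleC_add_left)
  finally show ?thesis by simp
qed

lemma scaleC_zero_right [simp]: "c *\<^sub>C (0::'a::complex_vector) = 0"
proof -
  have "c *\<^sub>C (0::'a) = c *\<^sub>C (0 + 0)" by simp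
  also have "\<dots> = c *\<^sub>C 0 + c *\<^sub>C 0" by (rule scaleC_add_right)
  finally show ?thesis by simp
qed

lemma scaleC_minus_right: "c *\<^sub>C (- (x::'a::complex_vector)) = - (c *\<^sub>C x)"
proof -
  have "c *\<^sub>C (- x) + c *\<^sub>C x = 0" by (simp flip: scaleC_add_right)
  then show ?thesis by (simp add: eq_neg_iff_add_eq_0)
qed

lemma scaleC_diff_right: "c *\<^sub>C ((x::'a::complex_vector) - y) = c *\<^sub>C x - c *\<^sub>C y"
  by (simp only: diff_conv_add_uminus scaleC_add_right scaleC_minus_right)

lemma scaleC_minus_left: "(- c) *\<^sub>C (x::'a::complex_vector) = - (c *\<^sub>C x)"
proof -
  have "(- c) *\<^sub>C x + c *\<^sub>C x = 0" by (simp flip: scaleC_add_left)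
  then show ?thesis by (simp add: eq_neg_iff_add_eq_0)
qed

lemma scaleC_diff_left: "(c - d) *\<^sub>C (x::'a::complex_vector) = c *\<^sub>C x - d *\<^sub>C x"
  by (simp only: diff_conv_add_uminus scaleC_add_left scaleC_minus_left)

lemma cinner_add_left: "cinner ((x::'a::complex_inner) + y) z = cinner x z + cinner y z"
proof -
  have "cinner (x + y) z = cnj (cinner z (x + y))" by (rule cinner_commute)
  also have "\<dots> = cnj (cinner z x) + cnj (cinner z y)" by (simp add: cinner_add_right)
  also have "\<dots> = cinner x z + cinner y z" using cinner_commute[of x z] cinner_commute[of y z] by simp
  finally show ?thesis .
qed

lemma cinner_scaleC_left: "cinner (c *\<^sub>C (x::'a::complex_inner)) y = cnj c * cinner x y"
proof -
  have "cinner (c *\<^sub>C x) y = cnj (cinner y (c *\<^sub>C x))" by (rule cinner_commute)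
  also have "\<dots> = cnj c * cnj (cinner y x)" by (simp add: cinner_scaleC_right)
  also have "\<dots> = cnj c * cinner x y" using cinner_commute[of x y] by simp
  finally show ?thesis .
qed

lemma cinner_zero_right [simp]: "cinner (x::'a::complex_inner) 0 = 0"
proof -
  have "cinner x 0 = cinner x ((0::complex) *\<^sub>C 0)" by simp
  also have "\<dots> = 0" by (simp only: cinner_scaleC_right) simp
  finally show ?thesis .
qed

lemma cinner_zero_left [simp]: "cinner 0 (x::'a::complex_inner) = 0"
  by (subst cinner_commute) simp

lemma cinner_minus_right: "cinner (x::'a::complex_inner) (- y) = - cinner x y"
proof -
  have "cinner x (- y) + cinner x y = 0" by (simp flip: cinner_add_right)
  then show ?thesis by (simp add: eq_neg_iff_add_eq_0)
qed

lemma cinner_minus_left: "cinner (- (x::'a::complex_inner)) y = - cinner x y"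
proof -
  have "cinner (- x) y + cinner x y = 0" by (simp flip: cinner_add_left)
  then show ?thesis by (simp add: eq_neg_iff_add_eq_0)
qed

lemma cinner_diff_right: "cinner (x::'a::complex_inner) (y - z) = cinner x y - cinner x z"
  by (simp only: diff_conv_add_uminus cinner_add_right cinner_minus_right)

lemma cinner_diff_left: "cinner ((x::'a::complex_inner) - y) z = cinner x z - cinner y z"
  by (simp only: diff_conv_add_uminus cinner_add_left cinner_minus_left)

lemma cinner_sum_right: "cinner (x::'a::complex_inner) (\<Sum>i\<in>A. f i) = (\<Sum>i\<in>A. cinner x (f i))"
  by (induction A rule: infinite_finite_induct) (auto simp: cinner_add_right)

lemma cinner_sum_left: "cinner (\<Sum>i\<in>A. f i) (x::'a::complex_inner) = (\<Sum>i\<in>A. cinner (f i) x)"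
  by (induction A rule: infinite_finite_induct) (auto simp: cinner_add_left)

lemma cinner_self_Im [simp]: "Im (cinner (x::'a::complex_inner) x) = 0"
proof -
  have "Im (cinner x x) = Im (cnj (cinner x x))" using arg_cong[OF cinner_commute[of x x], of Im] by (simp only:)
  then show ?thesis by simp
qed



lemma cinner_self_real: "cinner (x::'a::complex_inner) x = complex_of_real (Re (cinner x x))"
  by (simp add: complex_eq_iff)

lemma cnorm_ge0 [simp]: "0 \<le> cnorm x"
  using cinner_ge_zero[of x] by (simp add: cnorm_def)

lemma cnorm_sq: "(cnorm x)^2 = Re (cinner x x)"
  by (simp add: cnorm_def cinner_ge_zero)

lemma cinner_expand_diff:
  "cinner ((x::'a::complex_inner) - t *\<^sub>C y) (x - t *\<^sub>C y)
     = cinner x x - t * cinner x y - cnj t * cinner y x + cnj t * t * cinner y y"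
  by (simp add: cinner_diff_left cinner_diff_right cinner_scaleC_left cinner_scaleC_right algebra_simps)

lemma cauchy_schwarz_sq:
  "(cmod (cinner (x::'a::complex_inner) y))^2 \<le> Re (cinner x x) * Re (cinner y y)"
proof (cases "y = 0")
  case True then show ?thesis by simp
next
  case False
  define r where "r = Re (cinner y y)"
  have yy: "cinner y y = complex_of_real r" using cinner_self_real r_def by blast
  have "r \<noteq> 0" using False yy cinner_eq_zero_iff by force
  then have rpos: "r > 0" using cinner_ge_zero r_def by (metis order_le_less)
  define a where "a = cinner y x"
  have xy: "cinner x y = cnj a" using a_def cinner_commute by blast
  define t where "t = a / complex_of_real r"
  have "0 \<le> Re (cinner (x - t *\<^sub>C y) (x - t *\<^sub>C y))" by (rule cinner_ge_zero)
  also have "cinner (x - t *\<^sub>C y) (x - t *\<^sub>C y) = cinner x x - a * cnj a / complex_of_real r"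
    unfolding cinner_expand_diff xy yy a_def[symmetric] t_def using rpos
    by (simp add: field_simps power2_eq_square)
  also have "a * cnj a = complex_of_real ((cmod a)^2)" by (metis complex_norm_square of_real_power)
  finally have "0 \<le> Re (cinner x x) - (cmod a)^2 / r"
    by (simp del: of_real_power)
  then have "(cmod a)^2 \<le> Re (cinner x x) * r" using rpos by (simp add: field_simps)
  moreover have "cmod (cinner x y) = cmod a" using xy by simp
  ultimately show ?thesis by (simp add: r_def)
qed

lemma cauchy_schwarz: "cmod (cinner (x::'a::complex_inner) y) \<le> cnorm x * cnorm y"
proof -
  have "(cmod (cinner x y))^2 \<le> (cnorm x * cnorm y)^2"
    using cauchy_schwarz_sq[of x y] by (simp add: power_mult_distrib cnorm_sq)
  then show ?thesis by (meson cnorm_ge0 mult_nonneg_nonneg power2_le_imp_le)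
qed

lemma cinner_expand_add:
  "Re (cinner ((x::'a::complex_inner) + y) (x + y)) = Re (cinner x x) + 2 * Re (cinner x y) + Re (cinner y y)"
proof -
  have "Re (cinner y x) = Re (cinner x y)" using arg_cong[OF cinner_commute[of y x], of Re] by simp
  then show ?thesis by (simp add: cinner_add_left cinner_add_right)
qed

lemma cnorm_triangle: "cnorm ((x::'a::complex_inner) + y) \<le> cnorm x + cnorm y"
proof -
  have "Re (cinner x y) \<le> cnorm x * cnorm y"
    using cauchy_schwarz[of x y] complex_Re_le_cmod order_trans by blast
  then have "(cnorm (x + y))^2 \<le> (cnorm x + cnorm y)^2"
    by (simp add: cnorm_sq cinner_expand_add power2_sum)
  then show ?thesis by (rule power2_le_imp_le) simp
qed

lemma cnorm_scaleC: "cnorm (c *\<^sub>C (x::'a::complex_inner)) = cmod c * cnorm x"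
proof -
  have "cinner (c *\<^sub>C x) (c *\<^sub>C x) = complex_of_real ((cmod c)^2 * Re (cinner x x))"
  proof -
    have "cinner (c *\<^sub>C x) (c *\<^sub>C x) = (cnj c * c) * cinner x x"
      by (simp add: cinner_scaleC_left cinner_scaleC_right)
    also have "cnj c * c = complex_of_real ((cmod c)^2)"
      by (metis complex_norm_square mult.commute of_real_power)
    also have "cinner x x = complex_of_real (Re (cinner x x))" by (rule cinner_self_real)
    finally show ?thesis by simp
  qed
  then show ?thesis by (simp add: cnorm_def real_sqrt_mult)
qed

lemma cnorm_minus: "cnorm (- (x::'a::complex_inner)) = cnorm x"
  by (simp add: cnorm_def cinner_minus_left cinner_minus_right)

lemma cnorm_commute: "cnorm ((x::'a::complex_inner) - y) = cnorm (y - x)"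
  by (metis cnorm_minus minus_diff_eq)

lemma cnorm_diff_triangle: "cnorm ((x::'a::complex_inner) - y) \<le> cnorm x + cnorm y"
  by (metis cnorm_minus cnorm_triangle diff_conv_add_uminus)

lemma cnorm_zero [simp]: "cnorm (0::'a::complex_inner) = 0"
  using cinner_ge_zero[of x] by (simp add: cnorm_def)

lemma cnorm_eq_zero: "cnorm (x::'a::complex_inner) = 0 \<longleftrightarrow> x = 0"
proof -
  have "cnorm x = 0 \<longleftrightarrow> Re (cinner x x) = 0" using cinner_ge_zero[of x] by (simp add: cnorm_def)
  also have "\<dots> \<longleftrightarrow> cinner x x = 0" by (metis cinner_self_real of_real_0 zero_complex.simps(1))
  finally show ?thesis using cinner_eq_zero_iff by blast
qed

lemma cinner_ext: "(\<And>z. cinner z (a::'a::complex_inner) = cinner z b) \<Longrightarrow> a = b"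
  by (metis cinner_diff_right cinner_eq_zero_iff eq_iff_diff_eq_0)



lemma parallelogram:
  "Re (cinner ((a::'a::complex_inner) - b) (a - b)) = 2 * Re (cinner a a) + 2 * Re (cinner b b) - Re (cinner (a + b) (a + b))"
proof -
  have "Re (cinner (a + (- b)) (a + (- b))) = Re (cinner a a) + 2 * Re (cinner a (- b)) + Re (cinner (- b) (- b))"
    by (rule cinner_expand_add)
  then have "Re (cinner (a - b) (a - b)) = Re (cinner a a) - 2 * Re (cinner a b) + Re (cinner b b)"
    by (simp add: cinner_minus_left cinner_minus_right)
  then show ?thesis using cinner_expand_add[of a b] by simp
qed

lemma Re_cinner_scaleC_self:
  "Re (cinner (c *\<^sub>C (x::'a::complex_inner)) (c *\<^sub>C x)) = (cmod c)^2 * Re (cinner x x)"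
  using cnorm_scaleC[of c x] by (metis cnorm_sq power_mult_distrib)

lemma riesz_aux: fixes r a q b E :: real shows "- r < 2*a+q \<Longrightarrow> a - b \<le> E \<Longrightarrow> E \<le> -(2*b+q)/4 \<Longrightarrow> r < -(2*b+q)/2 \<Longrightarrow> False"
  by (simp add: field_simps)

lemma riesz:
  fixes f :: "'a::chilbert \<Rightarrow> complex"
  assumes add: "\<And>x y. f (x + y) = f x + f y"
    and sc: "\<And>c x. f (c *\<^sub>C x) = c * f x"
    and bd: "\<And>x. cmod (f x) \<le> K * cnorm x"
  shows "\<exists>z. \<forall>x. f x = cinner z x"
proof (cases "\<forall>x. f x = 0")
  case True
  then show ?thesis by (intro exI[of _ 0]) simp
next
  case False
  then obtain u where fu: "f u \<noteq> 0" by blast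
  have f0: "f 0 = 0" using sc[of 0 0] by simp
  have fdiff: "f (a - b) = f a - f b" for a b
    using add[of b "a - b"] by simp
  define K' where "K' = max K 0"
  have bd': "cmod (f x) \<le> K' * cnorm x" for x
    using bd[of x] by (smt (verit) K'_def cnorm_ge0 mult_right_mono max.cobounded1)
  have K'0: "K' \<ge> 0" by (simp add: K'_def)
  define C where "C = {x. f x = 1}"
  define u1 where "u1 = (1 / f u) *\<^sub>C u"
  have u1C: "u1 \<in> C" using fu by (simp add: C_def u1_def sc)
  define Q where "Q = (\<lambda>x::'a. Re (cinner x x))"
  define d where "d = Inf (Q ` C)"
  have bdd: "bdd_below (Q ` C)"
    by (rule bdd_belowI[of _ 0]) (auto simp: Q_def cinner_ge_zero)
  have dle: "d \<le> Q c" if "c \<in> C" for c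
    unfolding d_def using bdd that by (simp add: cInf_lower)
  have "\<exists>x\<in>C. Q x < d + 1 / real (Suc k)" for k
  proof -
    have 1: "Inf (Q ` C) < d + 1 / real (Suc k)" by (simp add: d_def)
    have 2: "Q ` C \<noteq> {}" using u1C by blast
    from cInf_lessD[OF 2 1] show ?thesis by blast
  qed
  then obtain X where XC: "\<And>k. X k \<in> C" and Xd: "\<And>k. Q (X k) < d + 1 / real (Suc k)"
    by metis
  have mid: "(1/2) *\<^sub>C (a + b) \<in> C" if "a \<in> C" "b \<in> C" for a b
    using that by (simp add: C_def sc add)
  have cauchy_est: "Q (X k - X l) \<le> 2 / real (Suc k) + 2 / real (Suc l)" for k l
  proof -
    have "d \<le> Q ((1/2) *\<^sub>C (X k + X l))" using mid XC dle by blast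
    also have "Q ((1/2) *\<^sub>C (X k + X l)) = Q (X k + X l) / 4"
      unfolding Q_def Re_cinner_scaleC_self by (simp add: power2_eq_square)
    finally have "4 * d \<le> Q (X k + X l)" by simp
    moreover have "Q (X k - X l) = 2 * Q (X k) + 2 * Q (X l) - Q (X k + X l)"
      unfolding Q_def by (rule parallelogram)
    ultimately show ?thesis using Xd[of k] Xd[of l] by linarith
  qed
  have "\<exists>w. \<forall>e>0. \<exists>N. \<forall>k\<ge>N. sqrt (Re (cinner (X k - w) (X k - w))) < e"
  proof (rule cauchy_convergent[of X], intro allI impI)
    fix e :: real assume e: "e > 0"
    obtain N :: nat where N0: "4 / e^2 < real N"
      using reals_Archimedean2 by blast
    have N: "4 / e^2 < real (Suc N)" using N0 by simp
    have "4 / real (Suc N) < e^2"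
      using N e by (simp add: field_simps)
    show "\<exists>N. \<forall>m\<ge>N. \<forall>k\<ge>N. sqrt (Re (cinner (X m - X k) (X m - X k))) < e"
    proof (intro exI[of _ N] allI impI)
      fix m k assume mk: "N \<le> m" "N \<le> k"
      have "2 / real (Suc m) \<le> 2 / real (Suc N)" using mk by (simp add: frac_le)
      moreover have "2 / real (Suc k) \<le> 2 / real (Suc N)" using mk by (simp add: frac_le)
      ultimately have "Q (X m - X k) < e^2"
        using cauchy_est[of m k] \<open>4 / real (Suc N) < e^2\<close> by simp
      then show "sqrt (Re (cinner (X m - X k) (X m - X k))) < e"
        using real_sqrt_less_mono[of "Q (X m - X k)" "e^2"] e unfolding Q_def by simp
    qed
  qed
  then obtain w where conv: "\<And>e. e > 0 \<Longrightarrow> \<exists>N. \<forall>k\<ge>N. cnorm (X k - w) < e"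
    unfolding cnorm_def by blast
  have fw: "f w = 1"
  proof (rule ccontr)
    assume "f w \<noteq> 1"
    define \<delta> where "\<delta> = cmod (f w - 1)"
    have dpos: "\<delta> > 0" using \<open>f w \<noteq> 1\<close> by (simp add: \<delta>_def)
    obtain N where "\<forall>k\<ge>N. cnorm (X k - w) < \<delta> / (K' + 1)"
      using conv[of "\<delta> / (K' + 1)"] dpos K'0 by auto
    then have c: "cnorm (X N - w) < \<delta> / (K' + 1)" by simp
    have "f (X N - w) = 1 - f w" using XC[of N] by (simp add: fdiff C_def)
    then have "\<delta> = cmod (f (X N - w))" by (simp add: \<delta>_def norm_minus_commute)
    also have "\<dots> \<le> K' * cnorm (X N - w)" by (rule bd')
    also have "\<dots> \<le> K' * (\<delta> / (K' + 1))" using c K'0 by (intro mult_left_mono) auto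
    also have "\<dots> < \<delta>" using dpos K'0 by (simp add: field_simps)
    finally show False by simp
  qed
  have orth: "cinner w n = 0" if fn: "f n = 0" for n
  proof -
    define nn where "nn = Q n"
    have nn0: "nn \<ge> 0" by (simp add: nn_def Q_def cinner_ge_zero)
    have step1: "0 \<le> 2 * Re (t * cinner w n) + (cmod t)^2 * nn" for t
    proof (rule ccontr)
      define g where "g = 2 * Re (t * cinner w n) + (cmod t)^2 * nn"
      assume "\<not> 0 \<le> 2 * Re (t * cinner w n) + (cmod t)^2 * nn"
      then have gneg: "g < 0" by (simp add: g_def)
      define \<delta> where "\<delta> = - g"
      have dpos: "\<delta> > 0" using gneg by (simp add: \<delta>_def)
      define e where "e = \<delta> / (4 * (cmod t * cnorm n + 1))"
      have epos: "e > 0" using dpos unfolding e_def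
        by (intro divide_pos_pos mult_pos_pos add_nonneg_pos mult_nonneg_nonneg) auto
      obtain N where N: "\<forall>k\<ge>N. cnorm (X k - w) < e" using conv epos by blast
      obtain M :: nat where M: "2 / \<delta> < real M" using reals_Archimedean2 by blast
      define k where "k = max N M"
      have ck: "cnorm (X k - w) < e" using N by (simp add: k_def)
      have "2 / \<delta> < real (Suc k)" using M by (simp add: k_def)
      then have kd: "1 / real (Suc k) < \<delta> / 2" using dpos by (simp add: field_simps)
      have "X k + t *\<^sub>C n \<in> C" using XC[of k] fn by (simp add: C_def add sc)
      then have "d \<le> Q (X k + t *\<^sub>C n)" by (rule dle)
      also have "Q (X k + t *\<^sub>C n) = Q (X k) + 2 * Re (cinner (X k) (t *\<^sub>C n)) + Q (t *\<^sub>C n)"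
        unfolding Q_def by (rule cinner_expand_add)
      also have "Q (t *\<^sub>C n) = (cmod t)^2 * nn" unfolding Q_def nn_def by (rule Re_cinner_scaleC_self)
      finally have A: "- 1 / real (Suc k) < 2 * Re (t * cinner (X k) n) + (cmod t)^2 * nn"
        using Xd[of k] by (simp add: cinner_scaleC_right)
      have "cmod (t * cinner (X k) n - t * cinner w n) = cmod t * cmod (cinner (X k - w) n)"
        by (simp add: cinner_diff_left flip: right_diff_distrib norm_mult)
      also have "\<dots> \<le> cmod t * (cnorm (X k - w) * cnorm n)"
        by (simp add: cauchy_schwarz mult_left_mono)
      also have "\<dots> \<le> cmod t * (e * cnorm n)"
        using ck by (simp add: mult_left_mono mult_right_mono)
      finally have B: "Re (t * cinner (X k) n) - Re (t * cinner w n) \<le> cmod t * cnorm n * e"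
        using complex_Re_le_cmod[of "t * cinner (X k) n - t * cinner w n"] by (simp add: algebra_simps)
      have D: "cmod t * cnorm n * e \<le> \<delta> / 4"
      proof -
        have "cmod t * cnorm n * e \<le> (cmod t * cnorm n + 1) * e" using epos by simp
        also have "\<dots> = \<delta> / 4"
        proof -
          have "cmod t * cnorm n + 1 > 0" by (simp add: add_nonneg_pos)
          then show ?thesis unfolding e_def by (simp add: field_simps)
        qed
        finally show ?thesis .
      qed
      have "- 1 / real (Suc k) = - (1 / real (Suc k))" by simp
      with A have A': "- (1 / real (Suc k)) < 2 * Re (t * cinner (X k) n) + (cmod t)^2 * nn" by simp
      show False using riesz_aux[OF A' B] D kd unfolding \<delta>_def g_def by blast
    qed
    define c where "c = (cmod (cinner w n))^2"
    define s where "s = 1 / (nn + 1)"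
    have spos: "s > 0" using nn0 by (simp add: s_def)
    have snn: "s * nn < 1" using nn0 by (simp add: s_def field_simps)
    define t where "t = - (complex_of_real s) * cnj (cinner w n)"
    have "t * cinner w n = - complex_of_real (s * c)"
    proof -
      have "cinner w n * cnj (cinner w n) = complex_of_real ((cmod (cinner w n))^2)"
        by (metis complex_norm_square of_real_power)
      then show ?thesis unfolding t_def c_def by (simp add: mult.commute mult.left_commute)
    qed
    then have r1: "Re (t * cinner w n) = - s * c" by simp
    have r2: "(cmod t)^2 = s^2 * c" unfolding t_def c_def using spos
      by (simp add: norm_mult power_mult_distrib)
    have "0 \<le> - 2 * s * c + s^2 * c * nn" using step1[of t] r1 r2 by simp
    then have "0 \<le> s * c * (s * nn - 2)" by (simp add: algebra_simps power2_eq_square)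
    moreover have "c \<ge> 0" by (simp add: c_def)
    ultimately have "c = 0" using spos snn
      by (smt (verit) mult_pos_neg mult_pos_pos)
    then show ?thesis by (simp add: c_def)
  qed
  have w0: "w \<noteq> 0" using fw f0 by auto
  then have ww: "cinner w w \<noteq> 0" using cinner_eq_zero_iff by blast
  define z where "z = (1 / cnj (cinner w w)) *\<^sub>C w"
  show ?thesis
  proof (intro exI[of _ z] allI)
    fix x
    have "f (x - f x *\<^sub>C w) = 0" by (simp add: fdiff sc fw)
    then have "cinner w (x - f x *\<^sub>C w) = 0" by (rule orth)
    then have wx: "cinner w x = f x * cinner w w" by (simp add: cinner_diff_right cinner_scaleC_right)
    have "cinner z x = (1 / cinner w w) * cinner w x" by (simp add: z_def cinner_scaleC_left)
    also have "\<dots> = f x" using wx ww by simp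
    finally show "f x = cinner z x" by simp
  qed
qed



lemma bclin_add: "bounded_clinear f \<Longrightarrow> f (x + y) = f x + f y"
  by (simp add: bounded_clinear_def)

lemma bclin_scale: "bounded_clinear f \<Longrightarrow> f (c *\<^sub>C x) = c *\<^sub>C f x"
  by (simp add: bounded_clinear_def)

lemma bclin_zero: "bounded_clinear f \<Longrightarrow> f 0 = 0"
  using bclin_scale[of f 0 0] by simp

lemma bclin_minus: "bounded_clinear f \<Longrightarrow> f (- x) = - f x"
  using bclin_add[of f x "- x"] bclin_zero[of f] by (simp add: eq_neg_iff_add_eq_0 add.commute)

lemma bclin_diff: "bounded_clinear f \<Longrightarrow> f (x - y) = f x - f y"
  by (simp only: diff_conv_add_uminus bclin_add bclin_minus)

lemma bclin_sum: "bounded_clinear f \<Longrightarrow> f (\<Sum>i\<in>A. g i) = (\<Sum>i\<in>A. f (g i))"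
  by (induction A rule: infinite_finite_induct) (auto simp: bclin_add bclin_zero)

lemma bclin_bound: "bounded_clinear f \<Longrightarrow> \<exists>K\<ge>0. \<forall>x. cnorm (f x) \<le> K * cnorm x"
proof -
  assume "bounded_clinear f"
  then obtain K where K: "\<And>x. cnorm (f x) \<le> K * cnorm x" by (auto simp: bounded_clinear_def)
  have "cnorm (f x) \<le> max K 0 * cnorm x" for x
  proof -
    have "K * cnorm x \<le> max K 0 * cnorm x" by (intro mult_right_mono) auto
    then show ?thesis using K[of x] by linarith
  qed
  then show ?thesis by (intro exI[of _ "max K 0"]) auto
qed

lemma bclin_comp: "bounded_clinear f \<Longrightarrow> bounded_clinear g \<Longrightarrow> bounded_clinear (\<lambda>x. f (g x))"
proof -
  assume f: "bounded_clinear f" and g: "bounded_clinear g"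
  obtain K1 where K1: "K1 \<ge> 0" "\<And>x. cnorm (f x) \<le> K1 * cnorm x" using bclin_bound[OF f] by blast
  obtain K2 where K2: "K2 \<ge> 0" "\<And>x. cnorm (g x) \<le> K2 * cnorm x" using bclin_bound[OF g] by blast
  have "cnorm (f (g x)) \<le> (K1 * K2) * cnorm x" for x
  proof -
    have "cnorm (f (g x)) \<le> K1 * cnorm (g x)" by (rule K1)
    also have "\<dots> \<le> K1 * (K2 * cnorm x)" using K1(1) K2(2)[of x] by (intro mult_left_mono)
    finally show ?thesis by simp
  qed
  then show ?thesis using f g by (auto simp: bounded_clinear_def)
qed

lemma bclin_sub: "bounded_clinear f \<Longrightarrow> bounded_clinear g \<Longrightarrow> bounded_clinear (\<lambda>x. f x - g x)"
proof -
  assume f: "bounded_clinear f" and g: "bounded_clinear g"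
  obtain K1 where K1: "K1 \<ge> 0" "\<And>x. cnorm (f x) \<le> K1 * cnorm x" using bclin_bound[OF f] by blast
  obtain K2 where K2: "K2 \<ge> 0" "\<And>x. cnorm (g x) \<le> K2 * cnorm x" using bclin_bound[OF g] by blast
  have "cnorm (f x - g x) \<le> (K1 + K2) * cnorm x" for x
  proof -
    have "cnorm (f x - g x) \<le> cnorm (f x) + cnorm (g x)" by (rule cnorm_diff_triangle)
    also have "\<dots> \<le> (K1 + K2) * cnorm x" using K1(2)[of x] K2(2)[of x] by (simp add: distrib_right)
    finally show ?thesis .
  qed
  moreover have "f (x + y) - g (x + y) = (f x - g x) + (f y - g y)" for x y
    using f g by (simp add: bclin_add)
  moreover have "f (c *\<^sub>C x) - g (c *\<^sub>C x) = c *\<^sub>C (f x - g x)" for c x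
    using f g by (simp add: bclin_scale scaleC_diff_right)
  ultimately show ?thesis by (auto simp: bounded_clinear_def)
qed

lemma adj_exists:
  fixes f :: "'a::chilbert \<Rightarrow> 'b::complex_inner"
  assumes f: "bounded_clinear f"
  shows "\<exists>g. \<forall>x y. cinner (f x) y = cinner x (g y)"
proof -
  obtain K where K: "K \<ge> 0" "\<And>x. cnorm (f x) \<le> K * cnorm x" using bclin_bound[OF f] by blast
  have "\<exists>z. \<forall>x. cinner (f x) y = cinner x z" for y
  proof -
    have bd: "cmod (cinner y (f x)) \<le> (cnorm y * K) * cnorm x" for x
    proof -
      have "cmod (cinner y (f x)) \<le> cnorm y * cnorm (f x)" by (rule cauchy_schwarz)
      also have "\<dots> \<le> cnorm y * (K * cnorm x)" by (intro mult_left_mono K(2)) simp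
      finally show ?thesis by simp
    qed
    obtain z where z: "\<forall>x. cinner y (f x) = cinner z x"
      using riesz[of "\<lambda>x. cinner y (f x)", OF _ _ bd]
      by (auto simp: bclin_add[OF f] bclin_scale[OF f] cinner_add_right cinner_scaleC_right)
    have "cinner (f x) y = cinner x z" for x
      using cinner_commute[of "f x" y] cinner_commute[of x z] z by simp
    then show ?thesis by blast
  qed
  then show ?thesis by metis
qed

lemma adj_prop:
  fixes f :: "'a::chilbert \<Rightarrow> 'b::complex_inner"
  assumes f: "bounded_clinear f"
  shows "cinner (f x) y = cinner x (adj f y)"
proof -
  have "\<forall>x y. cinner (f x) y = cinner x (adj f y)"
    unfolding adj_def using someI_ex[OF adj_exists[OF f]] .
  then show ?thesis by blast
qed

lemma adj_bclin:
  fixes f :: "'a::chilbert \<Rightarrow> 'b::complex_inner"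
  assumes f: "bounded_clinear f"
  shows "bounded_clinear (adj f)"
proof -
  obtain K where K: "K \<ge> 0" "\<And>x. cnorm (f x) \<le> K * cnorm x" using bclin_bound[OF f] by blast
  have add: "adj f (x + y) = adj f x + adj f y" for x y
    by (rule cinner_ext) (simp add: cinner_add_right flip: adj_prop[OF f])
  have sc: "adj f (c *\<^sub>C x) = c *\<^sub>C adj f x" for c x
    by (rule cinner_ext) (simp add: cinner_scaleC_right flip: adj_prop[OF f])
  have bd: "cnorm (adj f y) \<le> K * cnorm y" for y
  proof (cases "cnorm (adj f y) = 0")
    case True then show ?thesis using K by simp
  next
    case False
    then have pos: "cnorm (adj f y) > 0" using cnorm_ge0 by (metis order_le_less)
    have "(cnorm (adj f y))^2 = Re (cinner (adj f y) (adj f y))" by (rule cnorm_sq)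
    also have "cinner (adj f y) (adj f y) = cinner (f (adj f y)) y" by (simp add: adj_prop[OF f])
    also have "Re \<dots> \<le> cmod \<dots>" by (rule complex_Re_le_cmod)
    also have "\<dots> \<le> cnorm (f (adj f y)) * cnorm y" by (rule cauchy_schwarz)
    also have "\<dots> \<le> (K * cnorm (adj f y)) * cnorm y" by (intro mult_right_mono K(2)) simp
    finally have "cnorm (adj f y) * cnorm (adj f y) \<le> cnorm (adj f y) * (K * cnorm y)"
      by (simp add: power2_eq_square algebra_simps)
    then show ?thesis using pos by simp
  qed
  show ?thesis using add sc bd by (auto simp: bounded_clinear_def)
qed



lemma cnonneg_add: "cnonneg a \<Longrightarrow> cnonneg b \<Longrightarrow> cnonneg (a + b)"
  by (simp add: cnonneg_def)

lemma cnonneg_sum: "(\<And>i. i \<in> A \<Longrightarrow> cnonneg (f i)) \<Longrightarrow> cnonneg (sum f A)"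
  by (induction A rule: infinite_finite_induct) (auto simp: cnonneg_def)

lemma quad_diff_bound:
  fixes S :: "'a::complex_inner \<Rightarrow> 'a"
  assumes S: "bounded_clinear S" and K: "K \<ge> 0" "\<And>x. cnorm (S x) \<le> K * cnorm x"
  shows "cmod (cinner x (S x) - cinner y (S y)) \<le> K * cnorm (x - y) * (2 * cnorm x + cnorm (x - y))"
proof -
  define d where "d = x - y"
  have y: "y = x - d" by (simp add: d_def)
  have eq: "cinner x (S x) - cinner y (S y) = cinner x (S d) + cinner d (S x) - cinner d (S d)"
    unfolding y bclin_diff[OF S] cinner_diff_left cinner_diff_right by (simp add: algebra_simps)
  have b: "cmod (cinner u (S v)) \<le> cnorm u * (K * cnorm v)" for u v
  proof -
    have "cmod (cinner u (S v)) \<le> cnorm u * cnorm (S v)" by (rule cauchy_schwarz)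
    also have "\<dots> \<le> cnorm u * (K * cnorm v)" by (intro mult_left_mono K(2)) simp
    finally show ?thesis .
  qed
  have "cmod (cinner x (S d) + cinner d (S x) - cinner d (S d))
      \<le> cmod (cinner x (S d)) + cmod (cinner d (S x)) + cmod (cinner d (S d))"
    using norm_triangle_ineq4[of "cinner x (S d) + cinner d (S x)" "cinner d (S d)"]
      norm_triangle_ineq[of "cinner x (S d)" "cinner d (S x)"] by linarith
  also have "\<dots> \<le> cnorm x * (K * cnorm d) + cnorm d * (K * cnorm x) + cnorm d * (K * cnorm d)"
    using b[of x d] b[of d x] b[of d d] by linarith
  also have "\<dots> = K * cnorm d * (2 * cnorm x + cnorm d)" by (simp add: algebra_simps)
  finally show ?thesis unfolding eq d_def .
qed

lemma dense_pos:
  fixes S :: "'a::complex_inner \<Rightarrow> 'a"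
  assumes S: "bounded_clinear S" and P: "cdense P" and pos: "\<And>y. y \<in> P \<Longrightarrow> cnonneg (cinner y (S y))"
  shows "cnonneg (cinner x (S x))"
proof (rule ccontr)
  assume nn: "\<not> cnonneg (cinner x (S x))"
  obtain K where K: "K \<ge> 0" "\<And>x. cnorm (S x) \<le> K * cnorm x" using bclin_bound[OF S] by blast
  define qx where "qx = cinner x (S x)"
  define \<delta> where "\<delta> = \<bar>Im qx\<bar> + max 0 (- Re qx)"
  have dpos: "\<delta> > 0" using nn unfolding \<delta>_def qx_def cnonneg_def by auto
  define L where "L = 2 * K * cnorm x + K + 1"
  have Lpos: "L > 0" using K by (simp add: L_def add_nonneg_pos)
  define e where "e = min 1 (\<delta> / (2 * L))"
  have epos: "e > 0" using dpos Lpos by (simp add: e_def)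
  obtain y where yP: "y \<in> P" and xy: "cnorm (x - y) < e"
    using P epos unfolding cdense_def by blast
  define c where "c = cmod (qx - cinner y (S y))"
  have "c \<le> K * cnorm (x - y) * (2 * cnorm x + cnorm (x - y))"
    unfolding c_def qx_def by (rule quad_diff_bound[OF S K])
  also have "\<dots> \<le> K * e * (2 * cnorm x + 1)"
  proof -
    have e1: "e \<le> 1" by (simp add: e_def)
    have "K * cnorm (x - y) \<le> K * e" using xy K(1) by (intro mult_left_mono) auto
    moreover have "2 * cnorm x + cnorm (x - y) \<le> 2 * cnorm x + 1" using xy e1 by simp
    ultimately show ?thesis using K(1) epos
      by (rule_tac mult_mono) auto
  qed
  also have "\<dots> = e * (L - 1)" by (simp add: L_def algebra_simps)
  also have "\<dots> < e * L" using epos by simp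
  also have "\<dots> \<le> \<delta> / 2"
  proof -
    have "e \<le> \<delta> / (2 * L)" by (simp add: e_def)
    then have "e * L \<le> \<delta> / (2 * L) * L" using Lpos by (intro mult_right_mono) auto
    then show ?thesis using Lpos by simp
  qed
  finally have cd: "c < \<delta> / 2" .
  have qy: "cnonneg (cinner y (S y))" by (rule pos[OF yP])
  have "\<bar>Im qx\<bar> \<le> c"
  proof -
    have "Im qx = Im (qx - cinner y (S y))" using qy by (simp add: cnonneg_def)
    then show ?thesis unfolding c_def using abs_Im_le_cmod[of "qx - cinner y (S y)"] by simp
  qed
  moreover have "max 0 (- Re qx) \<le> c"
  proof -
    have "Re (cinner y (S y)) - Re qx \<le> c"
      using abs_Re_le_cmod[of "qx - cinner y (S y)"] unfolding c_def by simp
    then show ?thesis using qy c_def by (simp add: cnonneg_def)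
  qed
  moreover have "2 * c < \<delta>" using cd by simp
  ultimately show False unfolding \<delta>_def by linarith
qed



theorem lemma3p3:
  fixes n :: nat
    and \<rho> :: "nat \<Rightarrow> nat \<Rightarrow> 'a::{star_algebra,topological_space} \<Rightarrow> 'h::chilbert \<Rightarrow> 'h"
    and \<Phi> :: "'a \<Rightarrow> 'k::chilbert \<Rightarrow> 'k"
    and V :: "nat \<Rightarrow> 'h \<Rightarrow> 'k"
    and T1 T2 :: "'k \<Rightarrow> 'k"
  assumes "pro_cstar_algebra TYPE('a)"
    and "n \<ge> 1"
    and "completely_n_positive n \<rho>"
    and "stinespring_rep n \<rho> \<Phi> V"
    and "T1 \<in> commutant \<Phi>" and "pos_op T1"
    and "T2 \<in> commutant \<Phi>" and "pos_op T2"
  shows "op_le T1 T2 \<longleftrightarrow> cpn_le n (rho_T V \<Phi> T1) (rho_T V \<Phi> T2)"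
proof -
  have n1: "n \<ge> 1" by (rule assms(2))
  from assms(4) have rep: "representation \<Phi>" and Vb: "\<And>i. i < n \<Longrightarrow> bounded_clinear (V i)"
    and dense: "cdense (cspan {\<Phi> a (V i \<xi>) | a i \<xi>. i < n})"
    by (auto simp: stinespring_rep_def)
  from rep have \<Phi>lin: "cont_linear_op \<Phi>" and \<Phi>mult: "\<And>a b. \<Phi> (a * b) = \<Phi> a \<circ> \<Phi> b"
    and \<Phi>inv: "\<And>a. \<Phi> (invol a) = adj (\<Phi> a)"
    by (auto simp: representation_def)
  from \<Phi>lin have \<Phi>b: "\<And>a. bounded_clinear (\<Phi> a)"
    and \<Phi>add: "\<And>a b x. \<Phi> (a + b) x = \<Phi> a x + \<Phi> b x"
    and \<Phi>sc: "\<And>c a x. \<Phi> (c *\<^sub>C a) x = c *\<^sub>C \<Phi> a x"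
    and \<Phi>cont: "\<And>a0 e. e > 0 \<Longrightarrow> \<exists>U. open U \<and> a0 \<in> U \<and> (\<forall>a\<in>U. \<forall>x. cnorm (\<Phi> a x - \<Phi> a0 x) \<le> e * cnorm x)"
    by (auto simp: cont_linear_op_def)
  from assms(5) have T1b: "bounded_clinear T1" and T1c: "\<And>a x. T1 (\<Phi> a x) = \<Phi> a (T1 x)"
    by (auto simp: commutant_def fun_eq_iff)
  from assms(7) have T2b: "bounded_clinear T2" and T2c: "\<And>a x. T2 (\<Phi> a x) = \<Phi> a (T2 x)"
    by (auto simp: commutant_def fun_eq_iff)
  define S where "S = (\<lambda>x. T2 x - T1 x)"
  have Sb: "bounded_clinear S" unfolding S_def by (rule bclin_sub[OF T2b T1b])
  have Sc: "S (\<Phi> a x) = \<Phi> a (S x)" for a x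
    by (simp add: S_def T1c T2c bclin_diff[OF \<Phi>b])
  have \<Phi>0: "\<Phi> 0 x = 0" for x
    using \<Phi>add[of 0 0 x] by simp
  have \<Phi>sum: "\<Phi> (\<Sum>r\<in>R. g r) x = (\<Sum>r\<in>R. \<Phi> (g r) x)" for R g x
    by (induction R rule: infinite_finite_induct) (auto simp: \<Phi>0 \<Phi>add)
  have invol0: "invol (0::'a) = 0"
    using invol_add[of "0::'a" 0] by simp
  define Dfun where "Dfun = (\<lambda>i j a x. rho_T V \<Phi> T2 i j a x - rho_T V \<Phi> T1 i j a x)"
  have cpn: "cpn_le n (rho_T V \<Phi> T1) (rho_T V \<Phi> T2) = completely_n_positive n Dfun"
    by (simp add: cpn_le_def Dfun_def)
  have DD: "Dfun i j a x = adj (V i) (S (\<Phi> a (V j x)))" if "i < n" for i j a x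
    by (simp add: Dfun_def rho_T_def S_def bclin_diff[OF adj_bclin[OF Vb[OF that]]])
  have F: "cinner \<xi> (Dfun i j a \<eta>) = cinner (V i \<xi>) (S (\<Phi> a (V j \<eta>)))" if "i < n" for i j a \<xi> \<eta>
    by (simp add: DD[OF that] adj_prop[OF Vb[OF that]])
  have G': "cinner u (S (\<Phi> (invol b * c) z)) = cinner (\<Phi> b u) (S (\<Phi> c z))" for u b c z
  proof -
    have "S (\<Phi> (invol b * c) z) = S (\<Phi> (invol b) (\<Phi> c z))" by (simp add: \<Phi>mult)
    also have "\<dots> = \<Phi> (invol b) (S (\<Phi> c z))" by (rule Sc)
    also have "\<dots> = adj (\<Phi> b) (S (\<Phi> c z))" by (simp only: \<Phi>inv)
    finally show ?thesis by (simp add: adj_prop[OF \<Phi>b])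
  qed
  have G: "cinner \<xi> (Dfun i j (invol b * c) \<eta>) = cinner (\<Phi> b (V i \<xi>)) (S (\<Phi> c (V j \<eta>)))"
    if "i < n" for i j b c \<xi> \<eta>
    using F[OF that] G' by simp
  have case_eq: "(\<lambda>(k, i) (l, j). Dfun i j (x (k, i) (l, j))) p q = Dfun (snd p) (snd q) (x p q)"
    for x :: "nat \<times> nat \<Rightarrow> nat \<times> nat \<Rightarrow> 'a" and p q
    by (cases p; cases q) simp
  show ?thesis unfolding cpn
  proof
    assume le: "op_le T1 T2"
    then have Spos: "\<And>x. cnonneg (cinner x (S x))" by (simp add: op_le_def pos_op_def S_def)
    show "completely_n_positive n Dfun"
      unfolding completely_n_positive_def
    proof (intro conjI allI impI)
      fix i j assume ij: "i < n" "j < n"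
      have Ab: "bounded_clinear (adj (V i))" by (rule adj_bclin[OF Vb[OF ij(1)]])
      have Vjb: "bounded_clinear (V j)" by (rule Vb[OF ij(2)])
      have Deq: "Dfun i j a = (\<lambda>x. adj (V i) (S (\<Phi> a (V j x))))" for a
        by (rule ext) (rule DD[OF ij(1)])
      obtain K1 where K1: "K1 \<ge> 0" "\<And>x. cnorm (adj (V i) x) \<le> K1 * cnorm x" using bclin_bound[OF Ab] by blast
      obtain K2 where K2: "K2 \<ge> 0" "\<And>x. cnorm (S x) \<le> K2 * cnorm x" using bclin_bound[OF Sb] by blast
      obtain K3 where K3: "K3 \<ge> 0" "\<And>x. cnorm (V j x) \<le> K3 * cnorm x" using bclin_bound[OF Vjb] by blast
      define M where "M = (K1 + 1) * (K2 + 1) * (K3 + 1)"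
      have Mpos: "M > 0" using K1 K2 K3 by (simp add: M_def add_nonneg_pos)
      have KM: "K1 * K2 * K3 \<le> M" unfolding M_def using K1 K2 K3
        by (intro mult_mono) auto
      have cont: "\<exists>U. open U \<and> a0 \<in> U \<and> (\<forall>a\<in>U. \<forall>x. cnorm (Dfun i j a x - Dfun i j a0 x) \<le> e * cnorm x)"
        if e: "e > 0" for a0 e
      proof -
        obtain U where U: "open U" "a0 \<in> U" "\<And>a z. a \<in> U \<Longrightarrow> cnorm (\<Phi> a z - \<Phi> a0 z) \<le> (e / M) * cnorm z"
          using \<Phi>cont[of "e / M" a0] e Mpos by auto
        have "cnorm (Dfun i j a x - Dfun i j a0 x) \<le> e * cnorm x" if a: "a \<in> U" for a x
        proof -
          have "Dfun i j a x - Dfun i j a0 x = adj (V i) (S (\<Phi> a (V j x) - \<Phi> a0 (V j x)))"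
            by (simp add: Deq bclin_diff[OF Ab] bclin_diff[OF Sb])
          then have "cnorm (Dfun i j a x - Dfun i j a0 x) \<le> K1 * cnorm (S (\<Phi> a (V j x) - \<Phi> a0 (V j x)))"
            using K1(2) by simp
          also have "\<dots> \<le> K1 * (K2 * cnorm (\<Phi> a (V j x) - \<Phi> a0 (V j x)))"
            using K1(1) K2(2) by (intro mult_left_mono) auto
          also have "\<dots> \<le> K1 * (K2 * ((e / M) * cnorm (V j x)))"
            using K1(1) K2(1) U(3)[OF a] by (intro mult_left_mono) auto
          also have "\<dots> \<le> K1 * (K2 * ((e / M) * (K3 * cnorm x)))"
            using K1(1) K2(1) K3(2)[of x] e Mpos by (intro mult_left_mono) auto
          also have "\<dots> = (K1 * K2 * K3) * (e / M * cnorm x)" by (simp add: algebra_simps)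
          also have "\<dots> \<le> M * (e / M * cnorm x)"
            using KM e Mpos by (intro mult_right_mono) auto
          also have "\<dots> = e * cnorm x" using Mpos by simp
          finally show ?thesis .
        qed
        then show ?thesis using U by blast
      qed
      show "cont_linear_op (Dfun i j)"
        unfolding cont_linear_op_def
      proof (intro conjI allI impI)
        fix a
        show "bounded_clinear (Dfun i j a)"
        proof -
          have 1: "bounded_clinear (\<lambda>x. \<Phi> a (V j x))" by (rule bclin_comp[OF \<Phi>b Vjb])
          have 2: "bounded_clinear (\<lambda>x. S (\<Phi> a (V j x)))" by (rule bclin_comp[OF Sb 1])
          show ?thesis unfolding Deq by (rule bclin_comp[OF Ab 2])
        qed
      next
        fix a b x
        show "Dfun i j (a + b) x = Dfun i j a x + Dfun i j b x"
          by (simp add: Deq \<Phi>add bclin_add[OF Ab] bclin_add[OF Sb])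
      next
        fix c a x
        show "Dfun i j (c *\<^sub>C a) x = c *\<^sub>C Dfun i j a x"
          by (simp add: Deq \<Phi>sc bclin_scale[OF Ab] bclin_scale[OF Sb])
      next
        fix a0 :: 'a and e :: real
        assume "e > 0"
        then show "\<exists>U. open U \<and> a0 \<in> U \<and> (\<forall>a\<in>U. \<forall>x. cnorm (Dfun i j a x - Dfun i j a0 x) \<le> e * cnorm x)"
          by (rule cont)
      qed
    next
      fix m :: nat and x :: "nat \<times> nat \<Rightarrow> nat \<times> nat \<Rightarrow> 'a"
      define I where "I = {..<m} \<times> {..<n}"
      assume "mat_pos_alg ({..<m} \<times> {..<n}) x"
      then obtain y where y: "\<And>p q. p \<in> I \<Longrightarrow> q \<in> I \<Longrightarrow> x p q = (\<Sum>r\<in>I. invol (y r p) * y r q)"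
        unfolding mat_pos_alg_def I_def by blast
      show "mat_pos_op ({..<m} \<times> {..<n}) (\<lambda>(k, i) (l, j). Dfun i j (x (k, i) (l, j)))"
        unfolding mat_pos_op_def I_def[symmetric]
      proof
        fix \<xi> :: "nat \<times> nat \<Rightarrow> 'h"
        define W where "W = (\<lambda>r p. \<Phi> (y r p) (V (snd p) (\<xi> p)))"
        have "(\<Sum>p\<in>I. \<Sum>q\<in>I. cinner (\<xi> p) ((\<lambda>(k, i) (l, j). Dfun i j (x (k, i) (l, j))) p q (\<xi> q)))
            = (\<Sum>p\<in>I. \<Sum>q\<in>I. \<Sum>r\<in>I. cinner (W r p) (S (W r q)))"
        proof (intro sum.cong refl)
          fix p q assume pq: "p \<in> I" "q \<in> I"
          then have sp: "snd p < n" by (auto simp: I_def)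
          have "cinner (\<xi> p) ((\<lambda>(k, i) (l, j). Dfun i j (x (k, i) (l, j))) p q (\<xi> q))
              = cinner (\<xi> p) (Dfun (snd p) (snd q) (\<Sum>r\<in>I. invol (y r p) * y r q) (\<xi> q))"
            by (simp add: case_eq y[OF pq])
          also have "\<dots> = cinner (V (snd p) (\<xi> p)) (S (\<Phi> (\<Sum>r\<in>I. invol (y r p) * y r q) (V (snd q) (\<xi> q))))"
            by (rule F[OF sp])
          also have "\<dots> = (\<Sum>r\<in>I. cinner (V (snd p) (\<xi> p)) (S (\<Phi> (invol (y r p) * y r q) (V (snd q) (\<xi> q)))))"
            by (simp add: \<Phi>sum bclin_sum[OF Sb] cinner_sum_right)
          also have "\<dots> = (\<Sum>r\<in>I. cinner (W r p) (S (W r q)))"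
            by (simp add: G' W_def)
          finally show "cinner (\<xi> p) ((\<lambda>(k, i) (l, j). Dfun i j (x (k, i) (l, j))) p q (\<xi> q))
              = (\<Sum>r\<in>I. cinner (W r p) (S (W r q)))" .
        qed
        also have "\<dots> = (\<Sum>p\<in>I. \<Sum>r\<in>I. \<Sum>q\<in>I. cinner (W r p) (S (W r q)))"
          by (rule sum.cong[OF refl], rule sum.swap)
        also have "\<dots> = (\<Sum>r\<in>I. \<Sum>p\<in>I. \<Sum>q\<in>I. cinner (W r p) (S (W r q)))"
          by (rule sum.swap)
        also have "\<dots> = (\<Sum>r\<in>I. cinner (\<Sum>p\<in>I. W r p) (S (\<Sum>q\<in>I. W r q)))"
          by (intro sum.cong refl, subst cinner_sum_left) (simp add: cinner_sum_right bclin_sum[OF Sb])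
        finally show "cnonneg (\<Sum>p\<in>I. \<Sum>q\<in>I. cinner (\<xi> p) ((\<lambda>(k, i) (l, j). Dfun i j (x (k, i) (l, j))) p q (\<xi> q)))"
          using cnonneg_sum[of I "\<lambda>r. cinner (\<Sum>p\<in>I. W r p) (S (\<Sum>q\<in>I. W r q))"] Spos by simp
      qed
    qed
  next
    assume cp: "completely_n_positive n Dfun"
    have R1: "cnonneg (cinner (\<Sum>k<m. \<Phi> (A k) (V (J k) (\<Xi> k))) (S (\<Sum>k<m. \<Phi> (A k) (V (J k) (\<Xi> k)))))"
      if J: "\<And>k. k < m \<Longrightarrow> J k < n" for m :: nat and A J \<Xi>
    proof -
      define I where "I = {..<m} \<times> {..<n}"
      define Y where "Y = (\<lambda>p. if snd p = J (fst p) then A (fst p) else 0)"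
      define x where "x = (\<lambda>p q. invol (Y p) * Y q)"
      define y' where "y' = (\<lambda>r p. if r = (0::nat, 0::nat) then Y p else 0)"
      define \<xi>' where "\<xi>' = (\<lambda>p. if snd p = J (fst p) then \<Xi> (fst p) else 0)"
      have "\<forall>p\<in>I. \<forall>q\<in>I. x p q = (\<Sum>r\<in>I. invol (y' r p) * y' r q)"
      proof (intro ballI)
        fix p q assume p: "p \<in> I" and q: "q \<in> I"
        have 00: "(0, 0) \<in> I" using p n1 by (auto simp: I_def)
        have "invol (y' r p) * y' r q = (if r = (0, 0) then invol (Y p) * Y q else 0)" for r
          by (simp add: y'_def invol0)
        then have "(\<Sum>r\<in>I. invol (y' r p) * y' r q) = (\<Sum>r\<in>I. if r = (0, 0) then invol (Y p) * Y q else 0)"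
          by simp
        also have "\<dots> = invol (Y p) * Y q" using 00 by (simp add: I_def)
        finally show "x p q = (\<Sum>r\<in>I. invol (y' r p) * y' r q)" by (simp add: x_def)
      qed
      then have "mat_pos_alg I x" unfolding mat_pos_alg_def by blast
      then have "mat_pos_op I (\<lambda>(k, i) (l, j). Dfun i j (x (k, i) (l, j)))"
        using cp unfolding completely_n_positive_def I_def by blast
      then have pos: "cnonneg (\<Sum>p\<in>I. \<Sum>q\<in>I. cinner (\<xi>' p) ((\<lambda>(k, i) (l, j). Dfun i j (x (k, i) (l, j))) p q (\<xi>' q)))"
        unfolding mat_pos_op_def by blast
      define W where "W = (\<lambda>p. \<Phi> (Y p) (V (snd p) (\<xi>' p)))"
      have "(\<Sum>p\<in>I. \<Sum>q\<in>I. cinner (\<xi>' p) ((\<lambda>(k, i) (l, j). Dfun i j (x (k, i) (l, j))) p q (\<xi>' q)))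
          = (\<Sum>p\<in>I. \<Sum>q\<in>I. cinner (W p) (S (W q)))"
      proof (intro sum.cong refl)
        fix p q assume "p \<in> I" "q \<in> I"
        then have sp: "snd p < n" by (auto simp: I_def)
        show "cinner (\<xi>' p) ((\<lambda>(k, i) (l, j). Dfun i j (x (k, i) (l, j))) p q (\<xi>' q)) = cinner (W p) (S (W q))"
          unfolding case_eq unfolding x_def W_def by (rule G[OF sp])
      qed
      also have "\<dots> = cinner (\<Sum>p\<in>I. W p) (S (\<Sum>q\<in>I. W q))"
        by (subst cinner_sum_left) (simp add: cinner_sum_right bclin_sum[OF Sb])
      also have "(\<Sum>p\<in>I. W p) = (\<Sum>k<m. \<Phi> (A k) (V (J k) (\<Xi> k)))"
      proof -
        have "(\<Sum>p\<in>I. W p) = (\<Sum>k<m. \<Sum>i<n. W (k, i))"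
          unfolding I_def by (simp add: sum.cartesian_product)
        also have "\<dots> = (\<Sum>k<m. \<Phi> (A k) (V (J k) (\<Xi> k)))"
        proof (rule sum.cong[OF refl])
          fix k assume "k \<in> {..<m}"
          then have Jk: "J k < n" using J by simp
          have "W (k, i) = (if i = J k then \<Phi> (A k) (V (J k) (\<Xi> k)) else 0)" for i
            by (simp add: W_def Y_def \<xi>'_def \<Phi>0)
          then show "(\<Sum>i<n. W (k, i)) = \<Phi> (A k) (V (J k) (\<Xi> k))"
            using Jk by simp
        qed
        finally show ?thesis .
      qed
      finally show ?thesis using pos by simp
    qed
    have Ppos: "cnonneg (cinner v (S v))" if v: "v \<in> cspan {\<Phi> a (V i \<xi>) | a i \<xi>. i < n}" for v
    proof -
      obtain m :: nat and c s where vs: "v = (\<Sum>i<m. c i *\<^sub>C s i)"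
        and s: "\<forall>i<m. s i \<in> {\<Phi> a (V i \<xi>) | a i \<xi>. i < n}"
        using v unfolding cspan_def by blast
      have "\<forall>k<m. \<exists>a j \<xi>. j < n \<and> s k = \<Phi> a (V j \<xi>)" using s by blast
      then obtain A J \<Xi> where AJ: "\<forall>k<m. J k < n \<and> s k = \<Phi> (A k) (V (J k) (\<Xi> k))"
        by metis
      have "v = (\<Sum>k<m. \<Phi> (c k *\<^sub>C A k) (V (J k) (\<Xi> k)))"
        unfolding vs using AJ by (intro sum.cong refl) (simp add: \<Phi>sc)
      then show ?thesis using R1[of m J "\<lambda>k. c k *\<^sub>C A k" \<Xi>] AJ by simp
    qed
    have "cnonneg (cinner x (S x))" for x
      by (rule dense_pos[OF Sb dense Ppos])
    then show "op_le T1 T2"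
      using Sb by (simp add: op_le_def pos_op_def S_def)
  qed
qed

end
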